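(* Let $n>(p+s)^4$ be an integer. For any $j \in \{1,2,\ldots,p-1\}$, the function $t\mapsto R_n(t+j/p)$ on $\mathbb{Z}_p$ belongs to $C^\dagger(\mathbb{Z}_p,\mathbb{Q}_p)$, and \[ v_p\left( \mathcal{L}_1\left( R_n\left( t+\frac{j}{p} \right) \right) \right) \geqslant (p+1+s)(n+1) + s \cdot v_p(n!) -M_0 - 3 - \left\lfloor \frac{\log (n+1)}{\log p} \right\rfloor. \]
   Context: Let $p\geqslant 5$ be a prime and $s$ a positive integer. Write $v_p$ for the $p$-adic valuation and $(\alpha)_k=\alpha(\alpha+1)\cdots(\alpha+k-1)$. Put $N_0=v_p(p-1+s)$ and $M_0=p^{2+N_0}s-1$. For an integer $n>(p+s)^4$ let \[R_n(t)=p^{pn}\, n!^s\, t^{M_0}\,\frac{\prod_{j=1}^{p-1}(t+\frac{j}{p})_n}{(t)_{n+1}^{p-1+s}}\in\mathbb{Q}(t).\] For $\rho>1$, $C^{\mathrm{an}}_\rho(\mathbb{Z}_p,\mathbb{Q}_p)$ is the set of functions $f(x)=\sum_{k\geqslant0}a_kx^k$ on $\mathbb{Z}_p$ with $a_k\in\mathbb{Q}_p$ and $|a_k|_p\rho^k\to0$, and $C^\dagger(\mathbb{Z}_p,\mathbb{Q}_p)=\bigcup_{\rho>1}C^{\mathrm{an}}_\rho(\mathbb{Z}_p,\mathbb{Q}_p)$. The first Bernoulli functional $\mathcal{L}_1:C^\dagger(\mathbb{Z}_p,\mathbb{Q}_p)\to\mathbb{Q}_p$ is $\mathcal{L}_1\left(\sum_{k\geqslant0}a_kt^k\right)=\sum_{k\geqslant0}a_k\frac{B_{k+1}}{k+1}$,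 where $B_m$ are the Bernoulli numbers ($\frac{t}{e^t-1}=\sum_m B_m\frac{t^m}{m!}$). *)

theory Defs
  imports "HOL-Analysis.Analysis" "HOL-Computational_Algebra.Computational_Algebra"
begin

text \<open>p-adic valuation of a nonzero rational number (value 0 is handled separately).\<close>
definition padic_val_rat :: "nat \<Rightarrow> rat \<Rightarrow> int" where
  "padic_val_rat p x =
     int (multiplicity (int p) (fst (quotient_of x))) - int (multiplicity (int p) (snd (quotient_of x)))"

definition padic_abs :: "nat \<Rightarrow> rat \<Rightarrow> real" where
  "padic_abs p x = (if x = 0 then 0 else real p powi (- padic_val_rat p x))"

definition bernoulli_num :: "nat \<Rightarrow> rat" where
  "bernoulli_num m = fact m * (fps_X / (fps_exp 1 - 1) :: rat fps) $ m"

definition N0 :: "nat \<Rightarrow> nat \<Rightarrow> nat" where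
  "N0 p s = multiplicity p (p - 1 + s)"

definition M0 :: "nat \<Rightarrow> nat \<Rightarrow> nat" where
  "M0 p s = p ^ (2 + N0 p s) * s - 1"

text \<open>R_n(t) = Rn_num / Rn_den as a quotient of polynomials in t over Q.\<close>
definition Rn_num :: "nat \<Rightarrow> nat \<Rightarrow> nat \<Rightarrow> rat poly" where
  "Rn_num p s n = smult (of_nat p ^ (p * n) * fact n ^ s)
      (monom 1 (M0 p s) * (\<Prod>j\<in>{1..p-1}. pochhammer [:of_nat j / of_nat p, 1:] n))"

definition Rn_den :: "nat \<Rightarrow> nat \<Rightarrow> nat \<Rightarrow> rat poly" where
  "Rn_den p s n = pochhammer [:0, 1:] (n + 1) ^ (p - 1 + s)"

text \<open>Taylor coefficients at t = 0 of the rational function t \<mapsto> R_n(t + j/p).\<close>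
definition Rn_shift_coeffs :: "nat \<Rightarrow> nat \<Rightarrow> nat \<Rightarrow> nat \<Rightarrow> nat \<Rightarrow> rat" where
  "Rn_shift_coeffs p s n j k =
     (fps_of_poly (Rn_num p s n \<circ>\<^sub>p [:of_nat j / of_nat p, 1:])
      / fps_of_poly (Rn_den p s n \<circ>\<^sub>p [:of_nat j / of_nat p, 1:])) $ k"

text \<open>A power series sum a_k x^k lies in C^an_rho for some rho > 1 (i.e. in C^dagger).\<close>
definition in_C_dagger :: "nat \<Rightarrow> (nat \<Rightarrow> rat) \<Rightarrow> bool" where
  "in_C_dagger p a \<longleftrightarrow> (\<exists>\<rho>::real. \<rho> > 1 \<and> (\<lambda>k. padic_abs p (a k) * \<rho> ^ k) \<longlonglongrightarrow> 0)"

text \<open>Partial sums of L_1(sum a_k t^k) = sum a_k B_{k+1}/(k+1).\<close>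
definition L1_partial :: "(nat \<Rightarrow> rat) \<Rightarrow> nat \<Rightarrow> rat" where
  "L1_partial a N = (\<Sum>k<N. a k * bernoulli_num (k + 1) / of_nat (k + 1))"

text \<open>v_p(lim S_N) \<ge> c for a p-adically convergent sequence of rationals S_N:
  equivalent to v_p(S_N) \<ge> c for all sufficiently large N (with v_p(0) = \<infinity>).\<close>
definition padic_lim_val_ge :: "nat \<Rightarrow> (nat \<Rightarrow> rat) \<Rightarrow> int \<Rightarrow> bool" where
  "padic_lim_val_ge p S c \<longleftrightarrow> (\<exists>N0. \<forall>N\<ge>N0. S N = 0 \<or> padic_val_rat p (S N) \<ge> c)"

end

theory Submission
  imports Defs
begin

definition vge :: "nat \<Rightarrow> rat \<Rightarrow> int \<Rightarrow> bool" where
  "vge p x c \<longleftrightarrow> (\<exists>a b::int. b > 0 \<and> \<not> int p dvd b \<and> x = of_int a / of_int b * of_nat p powi c)"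

lemma p_ndvd_1: "prime p \<Longrightarrow> \<not> int p dvd 1"
  by (metis int_ops(2) of_nat_dvd_iff nat_dvd_1_iff_1 not_prime_1)

lemma vge_zero: "prime p \<Longrightarrow> vge p 0 c"
  unfolding vge_def by (rule exI[of _ 0], rule exI[of _ 1]) (auto simp: p_ndvd_1)

lemma vge_mono:
  assumes "prime p" "vge p x c" "c' \<le> c" shows "vge p x c'"
proof -
  obtain a b where ab: "b > 0" "\<not> int p dvd b" "x = of_int a / of_int b * of_nat p powi c"
    using assms(2) unfolding vge_def by blast
  have pp: "(of_nat p :: rat) \<noteq> 0" using assms(1) by (auto simp: prime_gt_0_nat)
  have "(of_nat p :: rat) powi c = of_nat p powi (c - c') * of_nat p powi c'"
    using pp by (simp add: power_int_add[symmetric])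
  also have "(of_nat p :: rat) powi (c - c') = of_int (int p ^ nat (c - c'))"
    using assms(3) by (simp add: power_int_def)
  finally have "x = of_int (a * int p ^ nat (c - c')) / of_int b * of_nat p powi c'"
    using ab(3) by simp
  with ab(1,2) show ?thesis unfolding vge_def by blast
qed

lemma vge_mult:
  assumes "prime p" "vge p x c" "vge p y d" shows "vge p (x * y) (c + d)"
proof -
  obtain a b where ab: "b > 0" "\<not> int p dvd b" "x = of_int a / of_int b * of_nat p powi c"
    using assms(2) unfolding vge_def by blast
  obtain a' b' where ab': "b' > 0" "\<not> int p dvd b'" "y = of_int a' / of_int b' * of_nat p powi d"
    using assms(3) unfolding vge_def by blast
  have pp: "(of_nat p :: rat) \<noteq> 0" using assms(1) by (auto simp: prime_gt_0_nat)
  have pr: "prime (int p)" using assms(1) by simp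
  have "\<not> int p dvd b * b'" using pr ab(2) ab'(2) by (simp add: prime_dvd_mult_iff)
  moreover have "x * y = of_int (a * a') / of_int (b * b') * of_nat p powi (c + d)"
    using ab(3) ab'(3) pp by (simp add: power_int_add)
  moreover have "b * b' > 0" using ab ab' by simp
  ultimately show ?thesis unfolding vge_def by blast
qed

lemma vge_add:
  assumes "prime p" "vge p x c" "vge p y c" shows "vge p (x + y) c"
proof -
  obtain a b where ab: "b > 0" "\<not> int p dvd b" "x = of_int a / of_int b * of_nat p powi c"
    using assms(2) unfolding vge_def by blast
  obtain a' b' where ab': "b' > 0" "\<not> int p dvd b'" "y = of_int a' / of_int b' * of_nat p powi c"
    using assms(3) unfolding vge_def by blast
  have pr: "prime (int p)" using assms(1) by simp
  have "\<not> int p dvd b * b'" using pr ab(2) ab'(2) by (simp add: prime_dvd_mult_iff)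
  moreover have "x + y = of_int (a * b' + a' * b) / of_int (b * b') * of_nat p powi c"
    using ab(3) ab'(3) ab(1) ab'(1) by (simp add: field_simps)
  moreover have "b * b' > 0" using ab ab' by simp
  ultimately show ?thesis unfolding vge_def by blast
qed

lemma vge_uminus:
  assumes "vge p x c" shows "vge p (- x) c"
proof -
  obtain a b where ab: "b > 0" "\<not> int p dvd b" "x = of_int a / of_int b * of_nat p powi c"
    using assms unfolding vge_def by blast
  then have "- x = of_int (- a) / of_int b * of_nat p powi c" by simp
  with ab show ?thesis unfolding vge_def by blast
qed

lemma vge_diff:
  assumes "prime p" "vge p x c" "vge p y c" shows "vge p (x - y) c"
  using vge_add[OF assms(1,2) vge_uminus[OF assms(3)]] by simp

lemma vge_sum:
  assumes "prime p" "\<And>i. i \<in> A \<Longrightarrow> vge p (f i) c" shows "vge p (\<Sum>i\<in>A. f i) c"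
  using assms(2)
proof (induction A rule: infinite_finite_induct)
  case (infinite A) then show ?case by (simp add: vge_zero assms(1))
next
  case empty then show ?case by (simp add: vge_zero assms(1))
next
  case (insert x F) then show ?case by (simp add: vge_add[OF assms(1)])
qed

lemma vge_int: "prime p \<Longrightarrow> vge p (of_int a) 0"
  unfolding vge_def by (rule exI[of _ a], rule exI[of _ 1]) (auto simp: p_ndvd_1)

lemma vge_nat: "prime p \<Longrightarrow> vge p (of_nat a) 0"
  using vge_int[of p "int a"] by simp

lemma vge_ppow: "prime p \<Longrightarrow> vge p (of_nat p ^ k) (int k)"
  unfolding vge_def by (rule exI[of _ 1], rule exI[of _ 1]) (auto simp: p_ndvd_1)

lemma vge_ppowi: "prime p \<Longrightarrow> vge p (of_nat p powi k) k"
  unfolding vge_def by (rule exI[of _ 1], rule exI[of _ 1]) (auto simp: p_ndvd_1)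

lemma vge_inv_coprime:
  assumes "\<not> int p dvd u" shows "vge p (1 / of_int u) 0"
proof (cases "u > 0")
  case True then show ?thesis using assms unfolding vge_def
    by (intro exI[of _ 1] exI[of _ u]) auto
next
  case False
  then have "u < 0" using assms by (cases "u = 0") auto
  then show ?thesis using assms unfolding vge_def
    by (intro exI[of _ "-1"] exI[of _ "-u"]) auto
qed

lemma vge_prod:
  assumes "prime p" "\<And>i. i \<in> A \<Longrightarrow> vge p (f i) (c i)" "finite A"
  shows "vge p (\<Prod>i\<in>A. f i) (\<Sum>i\<in>A. c i)"
  using assms(3,2)
proof (induction A rule: finite_induct)
  case empty then show ?case using vge_int[of p 1] assms(1) by simp
next
  case (insert x F) then show ?case by (simp add: vge_mult[OF assms(1)])
qed

lemma vge_power: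
  assumes "prime p" "vge p x c" shows "vge p (x ^ k) (int k * c)"
  using vge_prod[OF assms(1), of "{..<k}" "\<lambda>_. x" "\<lambda>_. c"] assms(2) by simp

lemma vge_val:
  assumes "prime p" "vge p x c" "x \<noteq> 0" shows "padic_val_rat p x \<ge> c"
proof -
  obtain a b where ab: "b > 0" "\<not> int p dvd b" "x = of_int a / of_int b * of_nat p powi c"
    using assms(2) unfolding vge_def by blast
  obtain u w where uw: "quotient_of x = (u, w)" by (cases "quotient_of x")
  have w0: "w > 0" using uw quotient_of_denom_pos by blast
  have xuw: "x = of_int u / of_int w" using quotient_of_div[OF uw] .
  have pr: "prime (int p)" using assms(1) by simp
  have a0: "a \<noteq> 0" using ab assms(3) by auto
  have u0: "u \<noteq> 0" using xuw assms(3) by auto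
  have mb: "multiplicity (int p) b = 0"
    using ab(2) by (simp add: not_dvd_imp_multiplicity_0)
  have val: "padic_val_rat p x = int (multiplicity (int p) u) - int (multiplicity (int p) w)"
    unfolding padic_val_rat_def uw by simp
  show ?thesis
  proof (cases "c \<ge> 0")
    case True
    define k where "k = nat c"
    have "(of_nat p :: rat) powi c = of_nat p ^ k" using True by (simp add: k_def power_int_def)
    then have "of_int u / of_int w = (of_int a / of_int b * of_nat p ^ k :: rat)" using ab(3) xuw by simp
    then have "(of_int (u * b) :: rat) = of_int (a * int p ^ k * w)"
      using ab(1) w0 by (simp add: field_simps)
    then have eq: "u * b = a * int p ^ k * w" by (simp only: of_int_eq_iff)
    have "multiplicity (int p) (u * b) = multiplicity (int p) (a * int p ^ k * w)" using eq by simp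
    then have "multiplicity (int p) u = multiplicity (int p) a + k + multiplicity (int p) w"
      using pr a0 u0 ab(1) w0 mb
      by (simp add: prime_elem_multiplicity_mult_distrib)
    then show ?thesis using val True k_def by simp
  next
    case False
    define k where "k = nat (- c)"
    have "(of_nat p :: rat) powi c = 1 / of_nat p ^ k" using False
      by (simp add: k_def power_int_def power_inverse divide_inverse)
    then have "of_int u / of_int w = (of_int a / of_int b / of_nat p ^ k :: rat)" using ab(3) xuw by simp
    then have "(of_int (u * b * int p ^ k) :: rat) = of_int (a * w)"
      using ab(1) w0 assms(1) by (simp add: field_simps prime_gt_0_nat)
    then have eq: "u * b * int p ^ k = a * w" by (simp only: of_int_eq_iff)
    have "multiplicity (int p) (u * b * int p ^ k) = multiplicity (int p) (a * w)" using eq by simp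
    then have "multiplicity (int p) u + k = multiplicity (int p) a + multiplicity (int p) w"
      using pr a0 u0 ab(1) w0 mb
      by (simp add: prime_elem_multiplicity_mult_distrib)
    then show ?thesis using val False k_def by simp
  qed
qed

lemma mult_lt_self:
  assumes "prime p" "u > 0" shows "multiplicity p u < u" "p ^ multiplicity p u \<le> u"
proof -
  have d: "p ^ multiplicity p u dvd u" by (rule multiplicity_dvd)
  show le: "p ^ multiplicity p u \<le> u" using dvd_imp_le[OF d assms(2)] .
  have "multiplicity p u < 2 ^ multiplicity p u" by (rule less_exp)
  also have "\<dots> \<le> p ^ multiplicity p u" using prime_ge_2_nat[OF assms(1)] by (intro power_mono) auto
  finally show "multiplicity p u < u" using le by linarith
qed

lemma vge_inv_nat:
  assumes "prime p" "u > 0" shows "vge p (1 / of_nat u) (- int (multiplicity p u))"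
proof -
  have u0: "u \<noteq> 0" using assms(2) by simp
  have nu: "\<not> is_unit p" using assms(1) not_prime_unit by blast
  obtain w where w: "u = p ^ multiplicity p u * w" "\<not> p dvd w"
    using multiplicity_decompose'[OF u0 nu] by blast
  have w0: "w > 0" using w assms(2) by (cases "w = 0") auto
  have pp: "(of_nat p :: rat) \<noteq> 0" using assms(1) by (auto simp: prime_gt_0_nat)
  have "(1 / of_nat u :: rat) = 1 / of_int (int w) * of_nat p powi (- int (multiplicity p u))"
    using pp w0 by (subst w(1)) (simp add: power_int_minus field_simps)
  moreover have "vge p (1 / of_int (int w)) 0" using w(2) by (intro vge_inv_coprime) simp
  ultimately show ?thesis
    using vge_mult[OF assms(1) _ vge_ppowi[OF assms(1)]] by fastforce
qed

definition Bf :: "rat fps" where "Bf = fps_X / (fps_exp 1 - 1)"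

lemma E1_ne: "(fps_exp 1 - 1 :: rat fps) \<noteq> 0"
proof
  assume "(fps_exp 1 - 1 :: rat fps) = 0"
  then have "(fps_exp 1 - 1 :: rat fps) $ 1 = 0" by simp
  then show False by simp
qed

lemma Bf_mult: "Bf * (fps_exp 1 - 1) = fps_X"
proof -
  have s: "subdegree (fps_exp 1 - 1 :: rat fps) = 1"
    by (rule subdegreeI) auto
  have "subdegree (fps_exp 1 - 1 :: rat fps) \<le> subdegree (fps_X :: rat fps)"
    by (simp only: s subdegree_fps_X)
  then have "(fps_exp 1 - 1 :: rat fps) dvd fps_X"
    using fps_dvd_iff[OF E1_ne, of fps_X] by simp
  then show ?thesis unfolding Bf_def by (rule dvd_div_mult_self)
qed

lemma tele: "(fps_exp 1 - 1 :: rat fps) * (\<Sum>a<N. fps_exp (of_nat a)) = fps_exp (of_nat N) - 1"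
proof (induction N)
  case 0 then show ?case by simp
next
  case (Suc N)
  have "fps_exp (of_nat (Suc N)) = (fps_exp 1 :: rat fps) * fps_exp (of_nat N)"
    by (simp add: fps_exp_add_mult[symmetric] add.commute)
  then show ?case using Suc by (simp add: algebra_simps)
qed

lemma faul_fps: "fps_X * (\<Sum>a<N. fps_exp (of_nat a)) = Bf * (fps_exp (of_nat N) - 1)"
proof -
  have "(fps_exp 1 - 1) * (fps_X * (\<Sum>a<N. fps_exp (of_nat a))) = fps_X * ((fps_exp 1 - 1) * (\<Sum>a<N. fps_exp (of_nat a :: rat)))"
    by (simp only: mult_ac)
  also have "\<dots> = fps_X * (fps_exp (of_nat N) - 1)"
    using tele[of N] by simp
  also have "\<dots> = (fps_exp 1 - 1) * (Bf * (fps_exp (of_nat N) - 1))"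
    using Bf_mult by (simp only: mult.assoc[symmetric] mult.commute[of "fps_exp 1 - 1" Bf])
  finally show ?thesis using E1_ne by simp
qed

lemma bern_Bf: "Bf $ i = bernoulli_num i / fact i"
  unfolding bernoulli_num_def Bf_def by simp

lemma Em1_nth: "k \<noteq> 0 \<Longrightarrow> (fps_exp c - 1 :: rat fps) $ k = c ^ k / fact k"
  by simp

lemma faul_coeff:
  "(\<Sum>a<N. (of_nat a :: rat) ^ m) / fact m =
   (\<Sum>i=0..m. bernoulli_num i / fact i * (of_nat N ^ (Suc m - i) / fact (Suc m - i)))"
proof -
  have "(fps_X * (\<Sum>a<N. fps_exp (of_nat a))) $ Suc m = (Bf * (fps_exp (of_nat N) - 1)) $ Suc m"
    using faul_fps by simp
  moreover have "(fps_X * (\<Sum>a<N. fps_exp (of_nat a :: rat))) $ Suc m = (\<Sum>a<N. (of_nat a :: rat) ^ m) / fact m"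
    by (simp add: fps_sum_nth sum_divide_distrib)
  moreover have "(Bf * (fps_exp (of_nat N) - 1)) $ Suc m =
     (\<Sum>i=0..Suc m. Bf $ i * (fps_exp (of_nat N) - 1) $ (Suc m - i))"
    by (rule fps_mult_nth)
  moreover have "\<dots> = (\<Sum>i=0..m. Bf $ i * (fps_exp (of_nat N) - 1) $ (Suc m - i))"
    by (simp add: sum.atLeast0_atMost_Suc)
  moreover have "\<dots> = (\<Sum>i=0..m. bernoulli_num i / fact i * (of_nat N ^ (Suc m - i) / fact (Suc m - i)))"
    by (intro sum.cong refl) (simp only: bern_Bf Em1_nth, simp)
  ultimately show ?thesis by simp
qed

lemma bern_rec:
  "of_nat p * bernoulli_num m = (\<Sum>a<p. (of_nat a :: rat) ^ m)
     - (\<Sum>i<m. (of_nat p * bernoulli_num i) * of_nat (m choose i) * (of_nat p ^ (m - i) / of_nat (m + 1 - i)))"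
proof -
  have "(\<Sum>a<p. (of_nat a :: rat) ^ m) = fact m * ((\<Sum>a<p. (of_nat a :: rat) ^ m) / fact m)" by simp
  also have "\<dots> = fact m * (\<Sum>i=0..m. bernoulli_num i / fact i * (of_nat p ^ (Suc m - i) / fact (Suc m - i)))"
    by (subst faul_coeff) simp
  also have "\<dots> = (\<Sum>i=0..m. fact m * (bernoulli_num i / fact i * (of_nat p ^ (Suc m - i) / fact (Suc m - i))))"
    by (simp add: sum_distrib_left)
  also have "\<dots> = (\<Sum>i\<le>m. fact m * (bernoulli_num i / fact i * (of_nat p ^ (Suc m - i) / fact (Suc m - i))))"
    by (simp add: atLeast0AtMost)
  also have "\<dots> = (\<Sum>i<m. fact m * (bernoulli_num i / fact i * (of_nat p ^ (Suc m - i) / fact (Suc m - i))))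
       + of_nat p * bernoulli_num m"
    by (simp add: lessThan_Suc_atMost[symmetric])
  also have "(\<Sum>i<m. fact m * (bernoulli_num i / fact i * (of_nat p ^ (Suc m - i) / fact (Suc m - i))))
     = (\<Sum>i<m. (of_nat p * bernoulli_num i) * of_nat (m choose i) * (of_nat p ^ (m - i) / of_nat (m + 1 - i)))"
  proof (intro sum.cong refl)
    fix i assume "i \<in> {..<m}"
    then have im: "i < m" by simp
    have f1: "(fact (Suc m - i) :: rat) = of_nat (m + 1 - i) * fact (m - i)"
      using im by (simp add: Suc_diff_le fact_Suc)
    have f2: "(of_nat (m choose i) :: rat) = fact m / (fact i * fact (m - i))"
      using im by (simp add: binomial_fact)
    have f3: "(of_nat p :: rat) ^ (Suc m - i) = of_nat p * of_nat p ^ (m - i)"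
      using im by (simp add: Suc_diff_le)
    show "fact m * (bernoulli_num i / fact i * (of_nat p ^ (Suc m - i) / fact (Suc m - i)))
       = (of_nat p * bernoulli_num i) * of_nat (m choose i) * (of_nat p ^ (m - i) / of_nat (m + 1 - i))"
      unfolding f1 f2 f3 using im by (simp add: field_simps)
  qed
  finally show ?thesis by simp
qed

lemma vge_ppow_div:
  assumes "prime p" shows "vge p (of_nat p ^ k / of_nat (k + 1)) 0"
proof -
  have "vge p (of_nat p ^ k * (1 / of_nat (k + 1))) (int k + - int (multiplicity p (k + 1)))"
    by (rule vge_mult[OF assms vge_ppow[OF assms] vge_inv_nat[OF assms]]) simp
  moreover have "multiplicity p (k + 1) \<le> k" using mult_lt_self(1)[OF assms, of "k+1"] by simp
  ultimately show ?thesis by (auto intro: vge_mono[OF assms])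
qed

lemma vge_pB: assumes "prime p" shows "vge p (of_nat p * bernoulli_num m) 0"
proof (induction m rule: less_induct)
  case (less m)
  have s1: "vge p (\<Sum>a<p. (of_nat a :: rat) ^ m) 0"
    by (rule vge_sum[OF assms]) (metis vge_nat[OF assms] of_nat_power)
  have s2: "vge p (\<Sum>i<m. (of_nat p * bernoulli_num i) * of_nat (m choose i) * (of_nat p ^ (m - i) / of_nat (m + 1 - i))) 0"
  proof (rule vge_sum[OF assms])
    fix i assume "i \<in> {..<m}"
    then have im: "i < m" by simp
    have "m + 1 - i = (m - i) + 1" using im by simp
    then have "vge p (of_nat p ^ (m - i) / of_nat (m + 1 - i)) 0"
      using vge_ppow_div[OF assms, of "m - i"] by simp
    then show "vge p ((of_nat p * bernoulli_num i) * of_nat (m choose i) * (of_nat p ^ (m - i) / of_nat (m + 1 - i))) 0"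
      using vge_mult[OF assms vge_mult[OF assms less[OF im] vge_nat[OF assms]]] by fastforce
  qed
  show ?case by (subst bern_rec) (rule vge_diff[OF assms s1 s2])
qed

lemma vge_B: assumes "prime p" shows "vge p (bernoulli_num m) (-1)"
proof -
  have pp: "(of_nat p :: rat) \<noteq> 0" using assms by (auto simp: prime_gt_0_nat)
  have "bernoulli_num m = (of_nat p * bernoulli_num m) * of_nat p powi (-1)"
    using pp by (simp add: power_int_minus)
  then show ?thesis using vge_mult[OF assms vge_pB[OF assms] vge_ppowi[OF assms], of m "-1"] by (simp only:) simp
qed

definition Bd :: "nat \<Rightarrow> int \<Rightarrow> int \<Rightarrow> rat fps \<Rightarrow> bool" where
  "Bd p r a f \<longleftrightarrow> (\<forall>k. vge p (f $ k) (a + r * int k))"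

lemma Bd_mult:
  assumes "prime p" "Bd p r a f" "Bd p r b g" shows "Bd p r (a + b) (f * g)"
  unfolding Bd_def
proof
  fix k
  show "vge p ((f * g) $ k) (a + b + r * int k)"
    unfolding fps_mult_nth
  proof (rule vge_sum[OF assms(1)])
    fix i assume "i \<in> {0..k}"
    then have ik: "i \<le> k" by simp
    have "vge p (f $ i * g $ (k - i)) ((a + r * int i) + (b + r * int (k - i)))"
      using assms(2,3) unfolding Bd_def by (intro vge_mult[OF assms(1)]) auto
    moreover have "(a + r * int i) + (b + r * int (k - i)) = a + b + r * int k"
      using ik by (simp add: of_nat_diff algebra_simps)
    ultimately show "vge p (f $ i * g $ (k - i)) (a + b + r * int k)" by simp
  qed
qed

lemma Bd_one: assumes "prime p" shows "Bd p r 0 1"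
  unfolding Bd_def
proof
  fix k show "vge p ((1::rat fps) $ k) (0 + r * int k)"
    using vge_nat[OF assms, of 1] vge_zero[OF assms] by (cases k) auto
qed

lemma Bd_prod:
  assumes "prime p" "finite A" "\<And>i. i \<in> A \<Longrightarrow> Bd p r (a i) (f i)"
  shows "Bd p r (\<Sum>i\<in>A. a i) (\<Prod>i\<in>A. f i)"
  using assms(2,3)
proof (induction A rule: finite_induct)
  case empty then show ?case using Bd_one[OF assms(1)] by simp
next
  case (insert x F) then show ?case by (simp add: Bd_mult[OF assms(1)])
qed

lemma Bd_power:
  assumes "prime p" "Bd p r a f" shows "Bd p r (int e * a) (f ^ e)"
  using Bd_prod[OF assms(1), of "{..<e}" r "\<lambda>_. a" "\<lambda>_. f"] assms(2) by simp

lemma Bd_mono: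
  assumes "prime p" "Bd p r a f" "b \<le> a" shows "Bd p r b f"
  using assms unfolding Bd_def by (auto intro: vge_mono)

lemma Bd_const:
  assumes "prime p" "vge p K a" shows "Bd p r a (fps_const K)"
  unfolding Bd_def
proof
  fix k show "vge p (fps_const K $ k) (a + r * int k)"
    using assms vge_zero[OF assms(1)] by (cases k) auto
qed

lemma Bd_lin:
  assumes "prime p" "vge p c a" "a + r \<le> 0" shows "Bd p r a (fps_of_poly [:c, 1:])"
  unfolding Bd_def
proof
  fix k show "vge p (fps_of_poly [:c, 1:] $ k) (a + r * int k)"
  proof (cases k)
    case 0 then show ?thesis using assms(2) by simp
  next
    case (Suc k')
    show ?thesis
    proof (cases k')
      case 0
      then show ?thesis using Suc vge_mono[OF assms(1) vge_nat[OF assms(1), of 1], of "a + r"] assms(3) by simp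
    next
      case (Suc k'') then show ?thesis using \<open>k = Suc k'\<close> vge_zero[OF assms(1)] by simp
    qed
  qed
qed

definition Gc :: "rat \<Rightarrow> rat fps" where
  "Gc c = Abs_fps (\<lambda>k. (-1) ^ k * (1 / c) ^ (k + 1))"

lemma Gc_inv:
  assumes "c \<noteq> 0" shows "fps_of_poly [:c, 1:] * Gc c = 1"
proof (rule fps_ext)
  fix k
  show "(fps_of_poly [:c, 1:] * Gc c) $ k = (1 :: rat fps) $ k"
  proof (cases k)
    case 0 then show ?thesis using assms by (simp add: fps_of_poly_linear Gc_def algebra_simps)
  next
    case (Suc k')
    have "(fps_of_poly [:c, 1:] * Gc c) $ k = Gc c $ k' + c * Gc c $ k"
      using Suc by (simp add: fps_of_poly_linear algebra_simps)
    also have "\<dots> = 0" using Suc assms by (simp add: Gc_def field_simps)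
    finally show ?thesis using Suc by simp
  qed
qed

lemma Bd_Gc:
  assumes "prime p" "vge p (1 / c) 1" "0 \<le> r" "r \<le> 1" shows "Bd p r 1 (Gc c)"
  unfolding Bd_def
proof
  fix k
  have "vge p ((-1) ^ k * (1 / c) ^ (k + 1)) (0 + int (k + 1) * 1)"
    using vge_mult[OF assms(1) vge_int[OF assms(1), of "(-1)^k"] vge_power[OF assms(1,2), of "k+1"]]
    by simp
  moreover have "1 + r * int k \<le> 0 + int (k + 1) * 1" using assms(3,4)
    by (simp add: mult_left_le_one_le)
  ultimately show "vge p (Gc c $ k) (1 + r * int k)"
    unfolding Gc_def by (auto intro: vge_mono[OF assms(1)])
qed

lemma pcompose_power: "pcompose (f ^ e) q = (pcompose f q) ^ e"
  by (induction e) (simp_all add: pcompose_mult pcompose_1)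

lemma lin_comp: "pcompose ([:a, 1:] + of_nat i) [:c0, 1:] = [:c0 + a + of_nat (i::nat), 1::rat:]"
  by (simp add: pcompose_pCons of_nat_poly algebra_simps)

lemma num_comp:
  "Rn_num p s n \<circ>\<^sub>p [:c0, 1:] = smult (of_nat p ^ (p * n) * fact n ^ s)
     ([:c0, 1:] ^ M0 p s * (\<Prod>j'\<in>{1..p-1}. \<Prod>i<n. [:c0 + of_nat j' / of_nat p + of_nat i, 1:]))"
proof -
  have m: "monom (1::rat) (M0 p s) = [:0, 1:] ^ M0 p s" by (simp add: monom_altdef)
  have "pcompose ([:0, 1:] ^ M0 p s) [:c0, 1:] = [:c0, 1:] ^ M0 p s"
    by (simp add: pcompose_power pcompose_pCons)
  moreover have "pcompose (pochhammer [:of_nat j' / of_nat p, 1:] n) [:c0, 1:] =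
      (\<Prod>i<n. [:c0 + of_nat j' / of_nat p + of_nat i, 1:])" for j' :: nat
    by (simp add: pochhammer_prod atLeast0LessThan pcompose_prod lin_comp)
  ultimately show ?thesis
    unfolding Rn_num_def m by (simp add: pcompose_smult pcompose_mult pcompose_prod)
qed

lemma den_comp:
  "Rn_den p s n \<circ>\<^sub>p [:c0, 1:] = (\<Prod>m<n+1. [:c0 + of_nat m, 1:]) ^ (p - 1 + s)"
proof -
  have "pcompose (pochhammer [:0, 1:] (n+1)) [:c0, 1:] = (\<Prod>m<n+1. [:c0 + of_nat m, 1:])"
  proof -
    have "pochhammer [:0, 1:] (n+1) = (\<Prod>m<n+1. [:0, 1:] + of_nat m :: rat poly)"
      by (simp only: pochhammer_prod atLeast0LessThan)
    then have "pcompose (pochhammer [:0, 1:] (n+1)) [:c0, 1:] = (\<Prod>m<n+1. pcompose ([:0, 1:] + of_nat m) [:c0, 1:])"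
      by (simp only: pcompose_prod)
    also have "\<dots> = (\<Prod>m<n+1. [:c0 + of_nat m, 1:])"
      by (intro prod.cong refl) (simp only: lin_comp, simp)
    finally show ?thesis .
  qed
  then show ?thesis unfolding Rn_den_def by (simp add: pcompose_power)
qed

definition Nf :: "nat \<Rightarrow> nat \<Rightarrow> nat \<Rightarrow> nat \<Rightarrow> rat fps" where
  "Nf p s n j = fps_const (of_nat p ^ (p * n) * fact n ^ s) *
     (fps_of_poly [:of_nat j / of_nat p, 1:] ^ M0 p s *
      (\<Prod>j'\<in>{1..p-1}. \<Prod>i<n. fps_of_poly [:of_nat j / of_nat p + of_nat j' / of_nat p + of_nat i, 1:]))"

definition Hf :: "nat \<Rightarrow> nat \<Rightarrow> nat \<Rightarrow> nat \<Rightarrow> rat fps" where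
  "Hf p s n j = (\<Prod>m<n+1. Gc (of_nat j / of_nat p + of_nat m)) ^ (p - 1 + s)"

lemma shift_eq:
  assumes "prime p" "j \<in> {1..p-1}"
  shows "Rn_shift_coeffs p s n j k = (Nf p s n j * Hf p s n j) $ k"
proof -
  define c0 :: rat where "c0 = of_nat j / of_nat p"
  have pp: "p > 0" using assms(1) prime_gt_0_nat by blast
  have c0pos: "c0 > 0" using assms(2) pp by (simp add: c0_def)
  have N: "fps_of_poly (Rn_num p s n \<circ>\<^sub>p [:c0, 1:]) = Nf p s n j"
    unfolding num_comp Nf_def c0_def
    by (simp add: fps_of_poly_smult fps_of_poly_mult fps_of_poly_power fps_of_poly_prod)
  define Df where "Df = (\<Prod>m<n+1. fps_of_poly [:c0 + of_nat m, 1:]) ^ (p - 1 + s)"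
  have D: "fps_of_poly (Rn_den p s n \<circ>\<^sub>p [:c0, 1:]) = Df"
    unfolding den_comp Df_def by (simp only: fps_of_poly_power fps_of_poly_prod)
  have DH: "Df * Hf p s n j = 1"
  proof -
    have "Df * Hf p s n j = (\<Prod>m<n+1. fps_of_poly [:c0 + of_nat m, 1:] * Gc (c0 + of_nat m)) ^ (p - 1 + s)"
      unfolding Df_def Hf_def c0_def by (simp add: power_mult_distrib prod.distrib)
    also have "\<dots> = 1"
    proof -
      have "fps_of_poly [:c0 + of_nat m, 1:] * Gc (c0 + of_nat m) = 1" for m :: nat
        using c0pos by (intro Gc_inv) (metis add_pos_nonneg of_nat_0_le_iff less_irrefl)
      then show ?thesis by simp
    qed
    finally show ?thesis .
  qed
  have D0: "Df \<noteq> 0" using DH by auto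
  have "Nf p s n j / Df = (Nf p s n j * Hf p s n j) * Df / Df"
    using DH by (simp add: mult.assoc mult.commute[of "Hf p s n j"])
  also have "\<dots> = Nf p s n j * Hf p s n j" using D0 by simp
  finally show ?thesis unfolding Rn_shift_coeffs_def c0_def[symmetric] N D by simp
qed

definition al :: "nat \<Rightarrow> nat \<Rightarrow> int \<Rightarrow> nat \<Rightarrow> int" where
  "al p j r j' = (if r = 0 \<and> j + j' = p then 0 else -1)"

lemma vge_fact: assumes "prime p" shows "vge p (fact n) (int (multiplicity p (fact n)))"
proof -
  have u0: "(fact n :: nat) \<noteq> 0" by simp
  have nu: "\<not> is_unit p" using assms not_prime_unit by blast
  obtain w where w: "(fact n :: nat) = p ^ multiplicity p (fact n) * w"
    using multiplicity_decompose'[OF u0 nu] by blast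
  have "(fact n :: rat) = of_nat (fact n)" by simp
  also have "\<dots> = of_nat p ^ multiplicity p (fact n) * of_nat w" by (subst w) simp
  finally show ?thesis
    using vge_mult[OF assms vge_ppow[OF assms] vge_nat[OF assms, of w]] by simp
qed

lemma vge_over_p: assumes "prime p" shows "vge p (of_nat a / of_nat p) (-1)"
proof -
  have pp: "(of_nat p :: rat) \<noteq> 0" using assms by (auto simp: prime_gt_0_nat)
  have "(of_nat a / of_nat p :: rat) = of_nat a * of_nat p powi (-1)"
    by (simp add: power_int_minus divide_inverse)
  then show ?thesis using vge_mult[OF assms vge_nat[OF assms] vge_ppowi[OF assms], of a "-1"] by simp
qed

lemma main_bd:
  assumes "prime p" "j \<in> {1..p-1}" "r = 0 \<or> r = 1"
  shows "Bd p r (int (p * n) + int s * int (multiplicity p (fact n)) + int (M0 p s) * (-1)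
           + (\<Sum>j'\<in>{1..p-1}. \<Sum>i<n. al p j r j') + int (p - 1 + s) * (\<Sum>m<n+1. 1))
         (Nf p s n j * Hf p s n j)"
proof -
  have pp: "(of_nat p :: rat) \<noteq> 0" using assms(1) by (auto simp: prime_gt_0_nat)
  have p2: "p \<ge> 2" using assms(1) prime_ge_2_nat by blast
  define c0 :: rat where "c0 = of_nat j / of_nat p"
  have B1: "Bd p r (int (p * n) + int s * int (multiplicity p (fact n)))
      (fps_const (of_nat p ^ (p * n) * fact n ^ s))"
    using vge_mult[OF assms(1) vge_ppow[OF assms(1), of "p*n"] vge_power[OF assms(1) vge_fact[OF assms(1)], of n s]]
    by (intro Bd_const[OF assms(1)]) (simp add: mult.commute)
  have B2: "Bd p r (int (M0 p s) * (-1)) (fps_of_poly [:c0, 1:] ^ M0 p s)"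
    by (intro Bd_power[OF assms(1)] Bd_lin[OF assms(1)]) (use vge_over_p[OF assms(1)] assms(3) in \<open>auto simp: c0_def\<close>)
  have B3: "Bd p r (\<Sum>j'\<in>{1..p-1}. \<Sum>i<n. al p j r j')
     (\<Prod>j'\<in>{1..p-1}. \<Prod>i<n. fps_of_poly [:c0 + of_nat j' / of_nat p + of_nat i, 1:])"
  proof (intro Bd_prod[OF assms(1)] finite_atLeastAtMost finite_lessThan)
    fix j' i assume j': "j' \<in> {1..p-1}"
    have eq: "c0 + of_nat j' / of_nat p + of_nat i = of_nat (j + j' + i * p) / of_nat p"
      using pp by (simp add: c0_def field_simps)
    show "Bd p r (al p j r j') (fps_of_poly [:c0 + of_nat j' / of_nat p + of_nat i, 1:])"
    proof (cases "r = 0 \<and> j + j' = p")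
      case True
      then have "c0 + of_nat j' / of_nat p + of_nat i = of_nat (1 + i)"
        using pp unfolding eq by (simp add: field_simps)
      then show ?thesis using True vge_nat[OF assms(1), of "1+i"]
        by (simp add: al_def Bd_lin[OF assms(1)])
    next
      case False
      have "vge p (of_nat (j + j' + i * p) / of_nat p) (-1)" by (rule vge_over_p[OF assms(1)])
      then show ?thesis unfolding eq al_def using False assms(3)
        by (intro Bd_lin[OF assms(1)]) auto
    qed
  qed
  have B4: "Bd p r (int (p - 1 + s) * (\<Sum>m<n+1. 1)) (Hf p s n j)"
    unfolding Hf_def
  proof (intro Bd_power[OF assms(1)] Bd_prod[OF assms(1)] finite_lessThan Bd_Gc[OF assms(1)])
    fix m assume "m \<in> {..<n+1}"
    have jp: "\<not> int p dvd int (j + m * p)"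
    proof
      assume "int p dvd int (j + m * p)"
      then have "p dvd j + m * p" by presburger
      then have "p dvd j" by (simp add: dvd_add_left_iff)
      then show False using assms(2) by (auto dest: dvd_imp_le)
    qed
    have "1 / (of_nat j / of_nat p + of_nat m) = 1 / of_int (int (j + m * p)) * (of_nat p :: rat) powi 1"
      using pp assms(2) by (simp add: field_simps)
    then show "vge p (1 / (of_nat j / of_nat p + of_nat m)) 1"
      using vge_mult[OF assms(1) vge_inv_coprime[OF jp] vge_ppowi[OF assms(1)], of 1] by simp
  qed (use assms(3) in auto)
  have X: "Bd p r ((int (p * n) + int s * int (multiplicity p (fact n))) + (int (M0 p s) * (-1)
           + (\<Sum>j'\<in>{1..p-1}. \<Sum>i<n. al p j r j')) + int (p - 1 + s) * (\<Sum>m<n+1. 1))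
         (Nf p s n j * Hf p s n j)"
    unfolding Nf_def c0_def[symmetric]
    by (intro Bd_mult[OF assms(1)] B1 B2 B3 B4)
  then show ?thesis by (simp only: add.assoc)
qed

lemma sum_al1: "(\<Sum>j'\<in>{1..p-1}. al p j 1 j') = - (int p - 1)" if "p \<ge> 1"
  using that by (simp add: al_def of_nat_diff)

lemma sum_al0:
  assumes "j \<in> {1..p-1}" "p \<ge> 2"
  shows "(\<Sum>j'\<in>{1..p-1}. al p j 0 j') = - (int p - 2)"
proof -
  have "(\<Sum>j'\<in>{1..p-1}. al p j 0 j') = (\<Sum>j'\<in>{1..p-1}. (-1 + (if j' = p - j then 1 else 0)))"
    using assms(1) by (intro sum.cong refl) (auto simp: al_def)
  also have "\<dots> = (\<Sum>j'\<in>{1..p-1}. (-1::int)) + (\<Sum>j'\<in>{1..p-1}. (if j' = p - j then 1 else 0))"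
    by (rule sum.distrib)
  also have "(\<Sum>j'\<in>{1..p-1}. (if j' = p - j then 1 else 0)) = (1::int)"
  proof -
    have "p - j \<in> {1..p-1}" using assms by auto
    then show ?thesis by (simp only: sum.delta finite_atLeastAtMost if_True)
  qed
  also have "(\<Sum>j'\<in>{1..p-1}. (-1::int)) = - int (p - 1)" by simp
  finally have X: "(\<Sum>j'\<in>{1..p-1}. al p j 0 j') = - int (p - 1) + 1" .
  have "int (p - 1) = int p - 1" using assms(2) by auto
  with X show ?thesis by linarith
qed

lemma key_nat:
  assumes "prime p" "n + 1 < p ^ (Lp + 1)"
  shows "multiplicity p (k + 1) \<le> Lp + (k - n)"
proof -
  define d where "d = k - n"
  define A where "A = p ^ (Lp + 1)"
  have p2: "p \<ge> 2" using assms(1) prime_ge_2_nat by blast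
  have d2: "d < 2 ^ d" by (rule less_exp)
  have "(2::nat) ^ d \<le> p ^ d" using p2 by (intro power_mono) auto
  with d2 have dl: "d < p ^ d" by (rule less_le_trans)
  have A1: "A \<ge> 1" unfolding A_def using p2 by simp
  have m1: "A * (p ^ d - 1) \<ge> 1 * (p ^ d - 1)"
    by (rule mult_right_mono) (use A1 in auto)
  have eq: "A * p ^ d = A * (p ^ d - 1) + A"
  proof -
    have "p ^ d = (p ^ d - 1) + 1" using dl by linarith
    then have "A * p ^ d = A * ((p ^ d - 1) + 1)" by (rule arg_cong)
    then show ?thesis by (simp only: distrib_left mult_1_right)
  qed
  have Ad: "A + d \<le> A * p ^ d" using eq m1 dl by linarith
  have "p ^ multiplicity p (k + 1) \<le> k + 1" using mult_lt_self(2)[OF assms(1), of "k+1"] by simp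
  also have "\<dots> \<le> n + 1 + d" unfolding d_def by simp
  also have "\<dots> < A + d" using assms(2) unfolding A_def by simp
  also have "\<dots> \<le> A * p ^ d" by (rule Ad)
  also have "\<dots> = p ^ (Lp + 1 + d)" unfolding A_def by (simp only: power_add)
  finally have lt: "p ^ multiplicity p (k + 1) < p ^ (Lp + 1 + d)" .
  have "multiplicity p (k + 1) < Lp + 1 + d"
    by (rule power_less_imp_less_exp[OF _ lt]) (use p2 in simp)
  then show ?thesis unfolding d_def by simp
qed

lemma L_facts:
  fixes n :: nat
  assumes "prime p"
  defines "L \<equiv> \<lfloor>ln (real (n + 1)) / ln (real p)\<rfloor>"
  shows "L \<ge> 0" "n + 1 < p ^ (nat L + 1)"
proof -
  have p2: "real p \<ge> 2" using assms(1) prime_ge_2_nat by (simp add: of_nat_le_iff[symmetric])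
  have lp: "ln (real p) > 0" using p2 by simp
  have ln0: "ln (real (n + 1)) \<ge> 0" by simp
  show L0: "L \<ge> 0" unfolding L_def using lp ln0 by simp
  have "ln (real (n + 1)) / ln (real p) < real_of_int L + 1" unfolding L_def by linarith
  then have "ln (real (n + 1)) < (real_of_int L + 1) * ln (real p)" using lp by (simp add: field_simps)
  also have "(real_of_int L + 1) = real (nat L + 1)" using L0 by simp
  also have "real (nat L + 1) * ln (real p) = ln (real p ^ (nat L + 1))" by (simp only: ln_realpow)
  finally have "real (n + 1) < real p ^ (nat L + 1)" using p2 by (simp del: of_nat_Suc)
  then show "n + 1 < p ^ (nat L + 1)" by (simp only: of_nat_power[symmetric] of_nat_less_iff)
qed

theorem lemma6p1:
  fixes p s n j :: nat
  assumes "prime p" and "p \<ge> 5" and "s \<ge> 1"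
    and "n > (p + s) ^ 4"
    and "j \<in> {1..p-1}"
  shows "in_C_dagger p (Rn_shift_coeffs p s n j)
    \<and> padic_lim_val_ge p (L1_partial (Rn_shift_coeffs p s n j))
        (int ((p + 1 + s) * (n + 1)) + int s * int (multiplicity p (fact n))
         - int (M0 p s) - 3 - \<lfloor>ln (real (n + 1)) / ln (real p)\<rfloor>)"
proof -
  have pr: "prime p" by (rule assms(1))
  have p2: "p \<ge> 2" using assms(2) by simp
  define v where "v = multiplicity p (fact n)"
  define G :: int where "G = int ((p + 1 + s) * (n + 1)) + int s * int v - int (M0 p s) - 2"
  define F where "F = Nf p s n j * Hf p s n j"
  have aF: "Rn_shift_coeffs p s n j k = F $ k" for k
    unfolding F_def by (rule shift_eq[OF pr assms(5)])
  have dsum: "(\<Sum>j'\<in>{1..p-1}. \<Sum>i<n. al p j r j') = int n * (\<Sum>j'\<in>{1..p-1}. al p j r j')" for r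
    by (simp add: sum_distrib_left)
  have msum: "(\<Sum>m<n+1. (1::int)) = int (n + 1)" by simp
  have ps: "int (p - 1 + s) = int p - 1 + int s" using p2 by simp
  have bd0: "Bd p 0 G F"
  proof -
    have "Bd p 0 (int (p * n) + int s * int v + int (M0 p s) * (-1)
           + (\<Sum>j'\<in>{1..p-1}. \<Sum>i<n. al p j 0 j') + int (p - 1 + s) * (\<Sum>m<n+1. 1)) F"
      unfolding F_def v_def by (rule main_bd[OF pr assms(5)]) simp
    moreover have "int (p * n) + int s * int v + int (M0 p s) * (-1)
           + (\<Sum>j'\<in>{1..p-1}. \<Sum>i<n. al p j 0 j') + int (p - 1 + s) * (\<Sum>m<n+1. 1) = G"
      unfolding dsum msum ps sum_al0[OF assms(5) p2] G_def by (simp add: algebra_simps)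
    ultimately show ?thesis by simp
  qed
  have s1: "(\<Sum>j'\<in>{1..p-1}. al p j 1 j') = - (int p - 1)"
    by (rule sum_al1) (use p2 in simp)
  have bd1: "Bd p 1 (G - int n) F"
  proof -
    have "Bd p 1 (int (p * n) + int s * int v + int (M0 p s) * (-1)
           + (\<Sum>j'\<in>{1..p-1}. \<Sum>i<n. al p j 1 j') + int (p - 1 + s) * (\<Sum>m<n+1. 1)) F"
      unfolding F_def v_def by (rule main_bd[OF pr assms(5)]) simp
    moreover have "int (p * n) + int s * int v + int (M0 p s) * (-1)
           + (\<Sum>j'\<in>{1..p-1}. \<Sum>i<n. al p j 1 j') + int (p - 1 + s) * (\<Sum>m<n+1. 1) = G - int n"
      using p2 unfolding dsum msum ps s1 G_def by (simp add: algebra_simps)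
    ultimately show ?thesis by simp
  qed
  have va: "vge p (F $ k) (G + int (k - n))" for k
  proof (cases "k \<le> n")
    case True then show ?thesis using bd0 unfolding Bd_def by simp
  next
    case False
    then have "G - int n + 1 * int k = G + int (k - n)" by simp
    then show ?thesis using bd1 unfolding Bd_def by metis
  qed
  have va1: "vge p (F $ k) (G - int n + int k)" for k
    using bd1 unfolding Bd_def by simp
  have part1: "in_C_dagger p (Rn_shift_coeffs p s n j)"
    unfolding in_C_dagger_def
  proof (intro exI[of _ 2] conjI)
    define C :: real where "C = real p powi (- (G - int n))"
    have rp: "real p \<ge> 1" using p2 by simp
    have rp0: "real p > 0" using p2 by simp
    have bound: "padic_abs p (Rn_shift_coeffs p s n j k) * 2 ^ k \<le> C * (2 / real p) ^ k" for k
    proof (cases "F $ k = 0")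
      case True
      then show ?thesis unfolding aF C_def padic_abs_def using rp0 by simp
    next
      case False
      have val: "padic_val_rat p (F $ k) \<ge> G - int n + int k" by (rule vge_val[OF pr va1 False])
      have "padic_abs p (F $ k) = real p powi (- padic_val_rat p (F $ k))"
        unfolding padic_abs_def using False by simp
      also have "\<dots> \<le> real p powi (- (G - int n + int k))"
        by (rule power_int_increasing) (use val rp in auto)
      also have "\<dots> = C * (1 / real p) ^ k"
      proof -
        have "real p powi (- (G - int n + int k)) = real p powi (- (G - int n) + (- int k))" by simp
        also have "\<dots> = real p powi (- (G - int n)) * real p powi (- int k)"
          using rp0 by (intro power_int_add) simp
        also have "real p powi (- int k) = (1 / real p) ^ k"
          by (simp only: power_int_minus_divide power_int_of_nat power_one_over)
        finally show ?thesis unfolding C_def .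
      qed
      finally have "padic_abs p (F $ k) * 2 ^ k \<le> C * (1 / real p) ^ k * 2 ^ k"
        by (rule mult_right_mono) simp
      also have "\<dots> = C * (2 / real p) ^ k" by (simp add: power_divide)
      finally show ?thesis unfolding aF .
    qed
    have lim: "(\<lambda>k. C * (2 / real p) ^ k) \<longlonglongrightarrow> 0"
      by (rule tendsto_mult_right_zero, rule LIMSEQ_power_zero) (use assms(2) in simp)
    show "(\<lambda>k. padic_abs p (Rn_shift_coeffs p s n j k) * 2 ^ k) \<longlonglongrightarrow> 0"
    proof (rule Lim_null_comparison[OF _ lim])
      show "\<forall>\<^sub>F k in sequentially. norm (padic_abs p (Rn_shift_coeffs p s n j k) * 2 ^ k) \<le> C * (2 / real p) ^ k"
        using bound by (intro always_eventually allI) (simp add: padic_abs_def)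
    qed
  qed (simp)
  define L where "L = \<lfloor>ln (real (n + 1)) / ln (real p)\<rfloor>"
  have L0: "L \<ge> 0" and Lb: "n + 1 < p ^ (nat L + 1)"
    using L_facts[OF pr, of n] unfolding L_def by auto
  have cG: "int ((p + 1 + s) * (n + 1)) + int s * int (multiplicity p (fact n))
         - int (M0 p s) - 3 - \<lfloor>ln (real (n + 1)) / ln (real p)\<rfloor> = G - 1 - L"
    unfolding G_def L_def v_def by simp
  have trm: "vge p (Rn_shift_coeffs p s n j k * bernoulli_num (k + 1) / of_nat (k + 1)) (G - 1 - L)" for k
  proof -
    have "vge p (F $ k * bernoulli_num (k + 1) * (1 / of_nat (k + 1)))
        (G + int (k - n) + -1 + - int (multiplicity p (k + 1)))"
      by (intro vge_mult[OF pr] va vge_B[OF pr] vge_inv_nat[OF pr]) simp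
    moreover have "multiplicity p (k + 1) \<le> nat L + (k - n)" by (rule key_nat[OF pr Lb])
    then have "G - 1 - L \<le> G + int (k - n) + -1 + - int (multiplicity p (k + 1))"
      using L0 by linarith
    ultimately show ?thesis unfolding aF by (auto intro: vge_mono[OF pr])
  qed
  have part2: "padic_lim_val_ge p (L1_partial (Rn_shift_coeffs p s n j)) (G - 1 - L)"
    unfolding padic_lim_val_ge_def
  proof (intro exI[of _ 0] allI impI)
    fix N :: nat
    have "vge p (L1_partial (Rn_shift_coeffs p s n j) N) (G - 1 - L)"
      unfolding L1_partial_def by (rule vge_sum[OF pr trm])
    then show "L1_partial (Rn_shift_coeffs p s n j) N = 0 \<or> G - 1 - L \<le> padic_val_rat p (L1_partial (Rn_shift_coeffs p s n j) N)"
      using vge_val[OF pr] by blast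
  qed
  show ?thesis using part1 part2 unfolding cG by simp
qed

end
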